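(* Let $\mathcal T_{\mathcal I}$ be a cluster tree in which every non-leaf cluster has exactly two sons, and let $(V_t)_{t\in\mathcal T_{\mathcal I}}$ be a nested cluster basis of rank $k$ with transfer matrices $(E_t)$, i.e. $V_{t|\hat t'\times k}=V_{t'}E_{t'}$ for all $t'\in\mathrm{sons}(t)$. Let $(Q_t)_{t\in\mathcal T_{\mathcal I}}$ be constructed as follows: for leaves $t$, $Q_t\in\mathbb{R}^{\hat t\times k_t}$ is any matrix with orthonormal columns, and we set $\widehat Q_t:=Q_t$, $\widehat V_t:=V_t$; for a non-leaf $t$ with sons $t_1,t_2$, set $U_t:=\begin{pmatrix}Q_{t_1}&0\\0&Q_{t_2}\end{pmatrix}$, $\widehat V_t:=U_t^TV_t$, choose $\widehat Q_t\in\mathbb{R}^{(k_{t_1}+k_{t_2})\times k_t}$ with orthonormal columns, and set $Q_t:=U_t\widehat Q_t$. Let $t_0\in\mathcal T_{\mathcal I}$, $N\in\mathbb N$, and let $(M_r)_{r\in\mathrm{sons}^*(t_0)}$ be matrices $M_r\in\mathbb{R}^{k\times N}$ satisfying $M_{r'}=E_{r'}M_r$ for all $r\in\mathrm{sons}^*(t_0)$ and $r'\in\mathrm{sons}(r)$. Then $$\|Q_{t_0}Q_{t_0}^TV_{t_0}M_{t_0}-V_{t_0}M_{t_0}\|_F^2=\sum_{r\in\mathrm{sons}^*(t_0)}\|\widehat Q_r\widehat Q_r^T\widehat V_rM_r-\widehat V_rM_r\|_F^2.$$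
   Context: A cluster tree for a finite index set $\mathcal I$ is a tree whose nodes $t$ are labeled by subsets $\hat t\subseteq\mathcal I$, the root being labeled $\mathcal I$ and the labels of the sons of a non-leaf node forming a disjoint partition of its label. $\mathrm{sons}^*(t)$ denotes the set of descendants of $t$ including $t$ itself: $\mathrm{sons}^*(t)=\{t\}$ if $t$ is a leaf and $\{t\}\cup\bigcup_{t'\in\mathrm{sons}(t)}\mathrm{sons}^*(t')$ otherwise. $\|\cdot\|_F$ is the Frobenius norm. *)

theory Defs
  imports Complex_Main "HOL-Library.Sublist"
begin

text \<open>A node of the tree is its position: the list of left/right choices from the root.
  The tree is a finite, prefix-closed set T of positions; the label (cluster) of a node p
  is lab p.\<close>

definition sons :: "bool list set \<Rightarrow> bool list \<Rightarrow> bool list set" where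
  "sons T t = {s \<in> T. \<exists>b. s = t @ [b]}"

definition is_leaf :: "bool list set \<Rightarrow> bool list \<Rightarrow> bool" where
  "is_leaf T t \<longleftrightarrow> sons T t = {}"

inductive_set sons_star :: "bool list set \<Rightarrow> bool list \<Rightarrow> bool list set"
  for T :: "bool list set" and t :: "bool list" where
  self: "t \<in> sons_star T t"
| step: "s \<in> sons_star T t \<Longrightarrow> s' \<in> sons T s \<Longrightarrow> s' \<in> sons_star T t"

definition binary_cluster_tree :: "'i set \<Rightarrow> bool list set \<Rightarrow> (bool list \<Rightarrow> 'i set) \<Rightarrow> bool" where
  "binary_cluster_tree I T lab \<longleftrightarrow>
     finite I \<and> finite T \<and> [] \<in> T \<and> lab [] = I \<and>
     (\<forall>p b. p @ [b] \<in> T \<longrightarrow> p \<in> T) \<and>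
     (\<forall>p\<in>T. (p @ [False] \<in> T) = (p @ [True] \<in> T)) \<and>
     (\<forall>p\<in>T. p @ [False] \<in> T \<longrightarrow>
        lab p = lab (p @ [False]) \<union> lab (p @ [True]) \<and>
        lab (p @ [False]) \<inter> lab (p @ [True]) = {})"

text \<open>A matrix in R^{R x C} is a function of type 'r \<Rightarrow> 'c \<Rightarrow> real, of which only
  the values on R x C are relevant.\<close>

definition mmul :: "'k set \<Rightarrow> ('r \<Rightarrow> 'k \<Rightarrow> real) \<Rightarrow> ('k \<Rightarrow> 'c \<Rightarrow> real) \<Rightarrow> 'r \<Rightarrow> 'c \<Rightarrow> real" where
  "mmul K A B = (\<lambda>i j. \<Sum>l\<in>K. A i l * B l j)"

definition mtr :: "('r \<Rightarrow> 'c \<Rightarrow> real) \<Rightarrow> 'c \<Rightarrow> 'r \<Rightarrow> real" where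
  "mtr A = (\<lambda>j i. A i j)"

definition mdiff :: "('r \<Rightarrow> 'c \<Rightarrow> real) \<Rightarrow> ('r \<Rightarrow> 'c \<Rightarrow> real) \<Rightarrow> 'r \<Rightarrow> 'c \<Rightarrow> real" where
  "mdiff A B = (\<lambda>i j. A i j - B i j)"

definition frob2 :: "'r set \<Rightarrow> 'c set \<Rightarrow> ('r \<Rightarrow> 'c \<Rightarrow> real) \<Rightarrow> real" where
  "frob2 R C A = (\<Sum>i\<in>R. \<Sum>j\<in>C. (A i j)\<^sup>2)"

definition orthonormal_cols :: "'r set \<Rightarrow> 'c set \<Rightarrow> ('r \<Rightarrow> 'c \<Rightarrow> real) \<Rightarrow> bool" where
  "orthonormal_cols R C Q \<longleftrightarrow>
     (\<forall>j\<in>C. \<forall>j'\<in>C. (\<Sum>i\<in>R. Q i j * Q i j') = (if j = j' then 1 else 0))"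

definition proj_err :: "'r set \<Rightarrow> 'c set \<Rightarrow> 'd set \<Rightarrow> ('r \<Rightarrow> 'c \<Rightarrow> real) \<Rightarrow> ('r \<Rightarrow> 'd \<Rightarrow> real) \<Rightarrow> real" where
  "proj_err R C D Q A = frob2 R D (mdiff (mmul R (mmul C Q (mtr Q)) A) A)"

text \<open>Block-diagonal matrix U_t = diag(Q_{t1}, Q_{t2}) in R^{t x (k_{t1}+k_{t2})},
  for t1 = t@[False], t2 = t@[True].\<close>
definition Ublock :: "(bool list \<Rightarrow> 'i set) \<Rightarrow> (bool list \<Rightarrow> nat) \<Rightarrow> (bool list \<Rightarrow> 'i \<Rightarrow> nat \<Rightarrow> real)
                       \<Rightarrow> bool list \<Rightarrow> 'i \<Rightarrow> nat \<Rightarrow> real" where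
  "Ublock lab kk Q t = (\<lambda>i a.
     if i \<in> lab (t @ [False]) \<and> a < kk (t @ [False]) then Q (t @ [False]) i a
     else if i \<in> lab (t @ [True]) \<and> kk (t @ [False]) \<le> a \<and> a < kk (t @ [False]) + kk (t @ [True])
       then Q (t @ [True]) i (a - kk (t @ [False]))
     else 0)"

text \<open>Row index set of the hatted matrices: t-hat (tagged Inl) for leaves,
  {0..<k_{t1}+k_{t2}} (tagged Inr) for non-leaves.\<close>
definition hrows :: "bool list set \<Rightarrow> (bool list \<Rightarrow> 'i set) \<Rightarrow> (bool list \<Rightarrow> nat) \<Rightarrow> bool list \<Rightarrow> ('i + nat) set" where
  "hrows T lab kk t =
     (if is_leaf T t then Inl ` lab t else Inr ` {..< kk (t @ [False]) + kk (t @ [True])})"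

end

theory Submission
  imports Defs
begin


lemma proj_err_eq:
  assumes fR: "finite R" and fC: "finite C" and on: "orthonormal_cols R C Q"
  shows "proj_err R C D Q A = frob2 R D A - frob2 C D (mmul R (mtr Q) A)"
proof -
  have col: "(\<Sum>i\<in>R. (mmul R (mmul C Q (mtr Q)) A i j - A i j)\<^sup>2)
        = (\<Sum>i\<in>R. (A i j)\<^sup>2) - (\<Sum>c\<in>C. (mmul R (mtr Q) A c j)\<^sup>2)" for j
  proof -
    define a where "a i = A i j" for i
    define b where "b c = (\<Sum>i\<in>R. Q i c * a i)" for c
    define p where "p i = (\<Sum>c\<in>C. Q i c * b c)" for i
    have pe: "mmul R (mmul C Q (mtr Q)) A i j = p i" for i
    proof -
      have "mmul R (mmul C Q (mtr Q)) A i j = (\<Sum>i'\<in>R. \<Sum>c\<in>C. Q i c * Q i' c * a i')"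
        by (simp add: mmul_def mtr_def a_def sum_distrib_right)
      also have "\<dots> = (\<Sum>c\<in>C. \<Sum>i'\<in>R. Q i c * (Q i' c * a i'))"
        by (subst sum.swap) (simp add: mult.assoc)
      also have "\<dots> = p i" by (simp add: p_def b_def sum_distrib_left)
      finally show ?thesis .
    qed
    have be: "mmul R (mtr Q) A c j = b c" for c by (simp add: mmul_def mtr_def b_def a_def)
    have pa: "(\<Sum>i\<in>R. p i * a i) = (\<Sum>c\<in>C. (b c)\<^sup>2)"
    proof -
      have "(\<Sum>i\<in>R. p i * a i) = (\<Sum>i\<in>R. \<Sum>c\<in>C. b c * (Q i c * a i))"
        by (simp add: p_def sum_distrib_right sum_distrib_left mult_ac)
      also have "\<dots> = (\<Sum>c\<in>C. b c * b c)"
        by (subst sum.swap) (simp add: b_def sum_distrib_left)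
      finally show ?thesis by (simp add: power2_eq_square)
    qed
    have pp: "(\<Sum>i\<in>R. (p i)\<^sup>2) = (\<Sum>c\<in>C. (b c)\<^sup>2)"
    proof -
      have "(\<Sum>i\<in>R. (p i)\<^sup>2) = (\<Sum>i\<in>R. \<Sum>c\<in>C. \<Sum>c'\<in>C. (b c * b c') * (Q i c * Q i c'))"
        by (simp add: power2_eq_square p_def sum_product mult_ac)
      also have "\<dots> = (\<Sum>c\<in>C. \<Sum>c'\<in>C. (b c * b c') * (\<Sum>i\<in>R. Q i c * Q i c'))"
        by (simp add: sum_distrib_left sum.swap[of _ C R] sum.swap[of _ C R])
      also have "\<dots> = (\<Sum>c\<in>C. \<Sum>c'\<in>C. (b c * b c') * (if c = c' then 1 else 0))"
        using on unfolding orthonormal_cols_def by (intro sum.cong refl) simp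
      also have "\<dots> = (\<Sum>c\<in>C. (b c)\<^sup>2)"
        using fC by (simp add: power2_eq_square if_distrib[of "\<lambda>x. _ * x"] sum.delta cong: if_cong)
      finally show ?thesis .
    qed
    have "(\<Sum>i\<in>R. (p i - a i)\<^sup>2) = (\<Sum>i\<in>R. (p i)\<^sup>2) - 2 * (\<Sum>i\<in>R. p i * a i) + (\<Sum>i\<in>R. (a i)\<^sup>2)"
      by (simp add: power2_diff sum.distrib sum_subtractf sum_distrib_left mult_ac)
    then show ?thesis using pe be pa pp by (simp add: a_def)
  qed
  show ?thesis unfolding proj_err_def frob2_def mdiff_def
    apply (subst (1 2 3) sum.swap)
    by (simp add: col sum_subtractf)
qed


lemma Ublock_orth:
  fixes lab :: "bool list \<Rightarrow> 'i set"
  assumes un: "lab t = lab (t@[False]) \<union> lab (t@[True])"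
    and dj: "lab (t@[False]) \<inter> lab (t@[True]) = {}"
    and f1: "finite (lab (t@[False]))" and f2: "finite (lab (t@[True]))"
    and o1: "orthonormal_cols (lab (t@[False])) {..<kk (t@[False])} (Q (t@[False]))"
    and o2: "orthonormal_cols (lab (t@[True])) {..<kk (t@[True])} (Q (t@[True]))"
    and a: "a < kk (t@[False]) + kk (t@[True])" and a': "a' < kk (t@[False]) + kk (t@[True])"
  shows "(\<Sum>i\<in>lab t. Ublock lab kk Q t i a * Ublock lab kk Q t i a') = (if a = a' then 1 else 0)"
proof -
  define k1 where "k1 = kk (t@[False])"
  define k2 where "k2 = kk (t@[True])"
  define U where "U = Ublock lab kk Q t"
  have U1: "i \<in> lab (t@[False]) \<Longrightarrow> U i x = (if x < k1 then Q (t@[False]) i x else 0)" for i x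
    unfolding U_def Ublock_def k1_def using dj by (auto simp: disjoint_iff)
  have U2: "i \<in> lab (t@[True]) \<Longrightarrow> x < k1 + k2 \<Longrightarrow> U i x = (if k1 \<le> x then Q (t@[True]) i (x - k1) else 0)" for i x
    unfolding U_def Ublock_def k1_def k2_def using dj by (auto simp: disjoint_iff)
  have s1: "(\<Sum>i\<in>lab (t@[False]). U i a * U i a') = (if a < k1 \<and> a' < k1 \<and> a = a' then 1 else 0)"
  proof -
    have "(\<Sum>i\<in>lab (t@[False]). U i a * U i a') = (\<Sum>i\<in>lab (t@[False]).
       (if a < k1 \<and> a' < k1 then Q (t@[False]) i a * Q (t@[False]) i a' else 0))"
      by (intro sum.cong refl) (simp add: U1)
    also have "\<dots> = (if a < k1 \<and> a' < k1 \<and> a = a' then 1 else 0)"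
      using o1 unfolding orthonormal_cols_def k1_def by (cases "a < kk (t@[False]) \<and> a' < kk (t@[False])") auto
    finally show ?thesis .
  qed
  have s2: "(\<Sum>i\<in>lab (t@[True]). U i a * U i a') = (if k1 \<le> a \<and> k1 \<le> a' \<and> a = a' then 1 else 0)"
  proof -
    have "(\<Sum>i\<in>lab (t@[True]). U i a * U i a') = (\<Sum>i\<in>lab (t@[True]).
       (if k1 \<le> a \<and> k1 \<le> a' then Q (t@[True]) i (a - k1) * Q (t@[True]) i (a' - k1) else 0))"
      using a a' by (intro sum.cong refl) (simp add: U2 k1_def k2_def)
    also have "\<dots> = (if k1 \<le> a \<and> k1 \<le> a' \<and> a = a' then 1 else 0)"
      using o2 a a' unfolding orthonormal_cols_def k1_def k2_def
      by (cases "kk (t@[False]) \<le> a \<and> kk (t@[False]) \<le> a'") (auto simp: less_diff_conv2)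
    finally show ?thesis .
  qed
  have "(\<Sum>i\<in>lab t. U i a * U i a') = (\<Sum>i\<in>lab (t@[False]). U i a * U i a') + (\<Sum>i\<in>lab (t@[True]). U i a * U i a')"
    unfolding un using f1 f2 dj by (rule sum.union_disjoint)
  then show ?thesis unfolding U_def[symmetric] using s1 s2 by auto
qed

lemma Q_node_orth:
  fixes U :: "'i \<Rightarrow> nat \<Rightarrow> real" and Qh :: "'x + nat \<Rightarrow> nat \<Rightarrow> real"
  assumes fR: "finite R"
    and Uo: "\<And>a a'. a < K \<Longrightarrow> a' < K \<Longrightarrow> (\<Sum>i\<in>R. U i a * U i a') = (if a = a' then 1 else 0)"
    and Qho: "orthonormal_cols (Inr ` {..<K}) C Qh"
    and Qe: "\<And>i j. i \<in> R \<Longrightarrow> j \<in> C \<Longrightarrow> Qt i j = (\<Sum>a<K. U i a * Qh (Inr a) j)"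
  shows "orthonormal_cols R C Qt"
  unfolding orthonormal_cols_def
proof (intro ballI)
  fix j j' assume j: "j \<in> C" and j': "j' \<in> C"
  have "(\<Sum>i\<in>R. Qt i j * Qt i j') = (\<Sum>i\<in>R. \<Sum>a<K. \<Sum>a'<K. (Qh (Inr a) j * Qh (Inr a') j') * (U i a * U i a'))"
  proof (intro sum.cong refl)
    fix i assume i: "i \<in> R"
    show "Qt i j * Qt i j' = (\<Sum>a<K. \<Sum>a'<K. (Qh (Inr a) j * Qh (Inr a') j') * (U i a * U i a'))"
      unfolding Qe[OF i j] Qe[OF i j'] sum_product by (intro sum.cong refl) (simp add: mult_ac)
  qed
  also have "\<dots> = (\<Sum>a<K. \<Sum>a'<K. (Qh (Inr a) j * Qh (Inr a') j') * (\<Sum>i\<in>R. U i a * U i a'))"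
    by (simp add: sum_distrib_left sum.swap[of _ "{..<K}" R])
  also have "\<dots> = (\<Sum>a<K. \<Sum>a'<K. (Qh (Inr a) j * Qh (Inr a') j') * (if a = a' then 1 else 0))"
    by (intro sum.cong refl) (simp add: Uo)
  also have "\<dots> = (\<Sum>a<K. Qh (Inr a) j * Qh (Inr a) j')"
    by (simp add: if_distrib[of "\<lambda>x. _ * x"] sum.delta cong: if_cong)
  also have "\<dots> = (\<Sum>x\<in>Inr ` {..<K}. Qh x j * Qh x j')"
    by (simp add: sum.reindex)
  also have "\<dots> = (if j = j' then 1 else 0)" using Qho j j' unfolding orthonormal_cols_def by blast
  finally show "(\<Sum>i\<in>R. Qt i j * Qt i j') = (if j = j' then 1 else 0)" .
qed


lemma sum_split_add: "(\<Sum>a<k1+k2. f a) = (\<Sum>a<k1. f a) + (\<Sum>c<k2. f (k1 + c))" for f :: "nat \<Rightarrow> real"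
  by (induction k2) auto

lemma Ublock_1:
  assumes dj: "lab (t@[False]) \<inter> lab (t@[True]) = {}" and i: "i \<in> lab (t@[False])"
  shows "Ublock lab kk Q t i x = (if x < kk (t@[False]) then Q (t@[False]) i x else 0)"
  unfolding Ublock_def using dj i by (auto simp: disjoint_iff)

lemma Ublock_2:
  assumes dj: "lab (t@[False]) \<inter> lab (t@[True]) = {}" and i: "i \<in> lab (t@[True])"
    and x: "x < kk (t@[False]) + kk (t@[True])"
  shows "Ublock lab kk Q t i x = (if kk (t@[False]) \<le> x then Q (t@[True]) i (x - kk (t@[False])) else 0)"
  unfolding Ublock_def using dj i x by (auto simp: disjoint_iff)

lemma sons_star_T: "s \<in> sons_star T t \<Longrightarrow> t \<in> T \<Longrightarrow> s \<in> T"
  by (induction rule: sons_star.induct) (auto simp: sons_def)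

lemma sons_star_prefix: "s \<in> sons_star T t \<Longrightarrow> \<exists>u. s = t @ u"
  by (induction rule: sons_star.induct) (auto simp: sons_def)

lemma sons_star_trans: "s \<in> sons_star T r \<Longrightarrow> r \<in> sons_star T t \<Longrightarrow> s \<in> sons_star T t"
  by (induction s rule: sons_star.induct) (auto intro: sons_star.step)

lemma sons_star_unfold: "sons_star T t = insert t (\<Union>s\<in>sons T t. sons_star T s)"
proof
  show "sons_star T t \<subseteq> insert t (\<Union>s\<in>sons T t. sons_star T s)"
  proof
    fix x assume "x \<in> sons_star T t"
    then show "x \<in> insert t (\<Union>s\<in>sons T t. sons_star T s)"
    proof (induction rule: sons_star.induct)
      case self then show ?case by simp
    next
      case (step s s')
      then show ?case by (auto intro: sons_star.self sons_star.step)
    qed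
  qed
next
  show "insert t (\<Union>s\<in>sons T t. sons_star T s) \<subseteq> sons_star T t"
    using sons_star_trans sons_star.step[OF sons_star.self] by (auto intro: sons_star.self)
qed

theorem mainTheorem4:
  fixes I :: "'i set" and T :: "bool list set" and lab :: "bool list \<Rightarrow> 'i set"
    and k :: nat and V :: "bool list \<Rightarrow> 'i \<Rightarrow> nat \<Rightarrow> real"
    and E :: "bool list \<Rightarrow> nat \<Rightarrow> nat \<Rightarrow> real"
    and kk :: "bool list \<Rightarrow> nat"
    and Q :: "bool list \<Rightarrow> 'i \<Rightarrow> nat \<Rightarrow> real"
    and Qh Vh :: "bool list \<Rightarrow> 'i + nat \<Rightarrow> nat \<Rightarrow> real"
    and t0 :: "bool list" and N :: nat and M :: "bool list \<Rightarrow> nat \<Rightarrow> nat \<Rightarrow> real"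
  assumes tree: "binary_cluster_tree I T lab"
    and nested: "\<And>t t' i j. t \<in> T \<Longrightarrow> t' \<in> sons T t \<Longrightarrow> i \<in> lab t' \<Longrightarrow> j < k \<Longrightarrow>
                   V t i j = (\<Sum>l<k. V t' i l * E t' l j)"
    and leaf_Q: "\<And>t. t \<in> T \<Longrightarrow> is_leaf T t \<Longrightarrow> orthonormal_cols (lab t) {..<kk t} (Q t)"
    and leaf_Qh: "\<And>t i j. t \<in> T \<Longrightarrow> is_leaf T t \<Longrightarrow> i \<in> lab t \<Longrightarrow> j < kk t \<Longrightarrow>
                   Qh t (Inl i) j = Q t i j"
    and leaf_Vh: "\<And>t i j. t \<in> T \<Longrightarrow> is_leaf T t \<Longrightarrow> i \<in> lab t \<Longrightarrow> j < k \<Longrightarrow>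
                   Vh t (Inl i) j = V t i j"
    and node_Vh: "\<And>t a j. t \<in> T \<Longrightarrow> \<not> is_leaf T t \<Longrightarrow>
                   a < kk (t @ [False]) + kk (t @ [True]) \<Longrightarrow> j < k \<Longrightarrow>
                   Vh t (Inr a) j = (\<Sum>i\<in>lab t. Ublock lab kk Q t i a * V t i j)"
    and node_Qh: "\<And>t. t \<in> T \<Longrightarrow> \<not> is_leaf T t \<Longrightarrow>
                   orthonormal_cols (Inr ` {..< kk (t @ [False]) + kk (t @ [True])}) {..<kk t} (Qh t)"
    and node_Q: "\<And>t i j. t \<in> T \<Longrightarrow> \<not> is_leaf T t \<Longrightarrow> i \<in> lab t \<Longrightarrow> j < kk t \<Longrightarrow>
                   Q t i j = (\<Sum>a < kk (t @ [False]) + kk (t @ [True]).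
                                Ublock lab kk Q t i a * Qh t (Inr a) j)"
    and t0: "t0 \<in> T"
    and M: "\<And>r r' l j. r \<in> sons_star T t0 \<Longrightarrow> r' \<in> sons T r \<Longrightarrow> l < k \<Longrightarrow> j < N \<Longrightarrow>
                   M r' l j = (\<Sum>m<k. E r' l m * M r m j)"
  shows "proj_err (lab t0) {..<kk t0} {..<N} (Q t0) (mmul {..<k} (V t0) (M t0))
       = (\<Sum>r\<in>sons_star T t0.
            proj_err (hrows T lab kk r) {..<kk r} {..<N} (Qh r) (mmul {..<k} (Vh r) (M r)))"
proof -
  have finT: "finite T" and rootT: "[] \<in> T" and rootlab: "lab [] = I" and finI: "finite I"
    and pref: "\<And>p b. p @ [b] \<in> T \<Longrightarrow> p \<in> T"
    and both: "\<And>p. p \<in> T \<Longrightarrow> (p @ [False] \<in> T) = (p @ [True] \<in> T)"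
    and split: "\<And>p. p \<in> T \<Longrightarrow> p @ [False] \<in> T \<Longrightarrow>
        lab p = lab (p @ [False]) \<union> lab (p @ [True]) \<and> lab (p @ [False]) \<inter> lab (p @ [True]) = {}"
    using tree unfolding binary_cluster_tree_def by blast+
  have labI: "p \<in> T \<Longrightarrow> lab p \<subseteq> I" for p
  proof (induction p rule: rev_induct)
    case Nil then show ?case using rootlab by simp
  next
    case (snoc b q)
    have q: "q \<in> T" using snoc.prems pref by blast
    have "q@[False] \<in> T" using snoc.prems q both by (cases b) auto
    then have "lab q = lab (q@[False]) \<union> lab (q@[True])" using q split by blast
    then show ?case using snoc.IH[OF q] by (cases b) auto
  qed
  have finlab: "p \<in> T \<Longrightarrow> finite (lab p)" for p using labI finI finite_subset by blast
  have nonleaf: "t \<in> T \<Longrightarrow> \<not> is_leaf T t \<Longrightarrow> t@[False] \<in> T \<and> t@[True] \<in> T" for t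
  proof -
    assume t: "t \<in> T" and nl: "\<not> is_leaf T t"
    then obtain b where "t@[b] \<in> T" unfolding is_leaf_def sons_def by blast
    then show ?thesis using both[OF t] by (cases b) auto
  qed
  have sonsnode: "t \<in> T \<Longrightarrow> \<not> is_leaf T t \<Longrightarrow> sons T t = {t@[False], t@[True]}" for t
  proof -
    assume t: "t \<in> T" and nl: "\<not> is_leaf T t"
    have "\<And>b. b = False \<or> b = True" by auto
    then show ?thesis using nonleaf[OF t nl] unfolding sons_def by auto
  qed
  have splitlab: "t \<in> T \<Longrightarrow> \<not> is_leaf T t \<Longrightarrow>
        lab t = lab (t @ [False]) \<union> lab (t @ [True]) \<and> lab (t @ [False]) \<inter> lab (t @ [True]) = {}" for t
    using split nonleaf by blast
  have leafss: "is_leaf T t \<Longrightarrow> sons_star T t = {t}" for t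
    using sons_star_unfold[of T t] unfolding is_leaf_def by simp
  define L where "L = Max (length ` T)"
  have lenL: "p \<in> T \<Longrightarrow> length p \<le> L" for p using finT by (simp add: L_def)
  have mdec: "t@[b] \<in> T \<Longrightarrow> L - length (t@[b]) < L - length t" for t b
    using lenL[of "t@[b]"] by simp
  have orthQ: "r \<in> T \<Longrightarrow> orthonormal_cols (lab r) {..<kk r} (Q r)" for r
  proof (induction "L - length r" arbitrary: r rule: less_induct)
    case less
    show ?case
    proof (cases "is_leaf T r")
      case True then show ?thesis using leaf_Q less.prems by blast
    next
      case False
      note ns = nonleaf[OF less.prems False]
      note sl = splitlab[OF less.prems False]
      have o1: "orthonormal_cols (lab (r@[False])) {..<kk (r@[False])} (Q (r@[False]))"
        using less.hyps[OF mdec] ns by blast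
      have o2: "orthonormal_cols (lab (r@[True])) {..<kk (r@[True])} (Q (r@[True]))"
        using less.hyps[OF mdec] ns by blast
      show ?thesis
        apply (rule Q_node_orth[where U="Ublock lab kk Q r" and K="kk (r@[False]) + kk (r@[True])" and Qh="Qh r"])
        using finlab less.prems apply blast
          apply (rule Ublock_orth) using sl finlab ns o1 o2 apply auto[8]
        using node_Qh less.prems False apply blast
        using node_Q less.prems False by blast
    qed
  qed
  define VM where "VM r = mmul {..<k} (V r) (M r)" for r
  define VhM where "VhM r = mmul {..<k} (Vh r) (M r)" for r
  define err where "err r = proj_err (lab r) {..<kk r} {..<N} (Q r) (VM r)" for r
  define errh where "errh r = proj_err (hrows T lab kk r) {..<kk r} {..<N} (Qh r) (VhM r)" for r
  have VMson: "VM r i j = VM r' i j"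
    if r: "r \<in> sons_star T t0" and r': "r' \<in> sons T r" and i: "i \<in> lab r'" and j: "j < N" for r r' i j
  proof -
    have rT: "r \<in> T" using sons_star_T[OF r t0] .
    have "VM r i j = (\<Sum>l<k. (\<Sum>l'<k. V r' i l' * E r' l' l) * M r l j)"
      unfolding VM_def mmul_def by (intro sum.cong refl) (simp add: nested[OF rT r' i])
    also have "\<dots> = (\<Sum>l'<k. V r' i l' * (\<Sum>l<k. E r' l' l * M r l j))"
      proof -
      have "(\<Sum>l<k. (\<Sum>l'<k. V r' i l' * E r' l' l) * M r l j) = (\<Sum>l<k. \<Sum>l'<k. V r' i l' * (E r' l' l * M r l j))"
        by (simp add: sum_distrib_right mult.assoc)
      also have "\<dots> = (\<Sum>l'<k. \<Sum>l<k. V r' i l' * (E r' l' l * M r l j))" by (rule sum.swap)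
      finally show ?thesis by (simp add: sum_distrib_left)
    qed
    also have "\<dots> = VM r' i j"
      unfolding VM_def mmul_def using M[OF r r' _ j] by simp
    finally show ?thesis .
  qed
  have key: "r \<in> sons_star T t0 \<Longrightarrow> err r = (\<Sum>s\<in>sons_star T r. errh s)" for r
  proof (induction "L - length r" arbitrary: r rule: less_induct)
    case less
    have rT: "r \<in> T" using sons_star_T[OF less.prems t0] .
    show ?case
    proof (cases "is_leaf T r")
      case True
      have hr: "hrows T lab kk r = Inl ` lab r" using True by (simp add: hrows_def)
      have fr: "finite (lab r)" using finlab[OF rT] .
      have VhMe: "VhM r (Inl i) j = VM r i j" if "i \<in> lab r" for i j
        unfolding VhM_def VM_def mmul_def using leaf_Vh[OF rT True that] by simp
      have oh: "orthonormal_cols (Inl ` lab r) {..<kk r} (Qh r)"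
        using orthQ[OF rT] unfolding orthonormal_cols_def
        by (simp add: sum.reindex leaf_Qh[OF rT True])
      have A: "mmul (Inl ` lab r) (mtr (Qh r)) (VhM r) c j = mmul (lab r) (mtr (Q r)) (VM r) c j"
        if "c < kk r" for c j
        unfolding mmul_def mtr_def using that by (simp add: sum.reindex leaf_Qh[OF rT True] VhMe)
      have B: "frob2 (Inl ` lab r) {..<N} (VhM r) = frob2 (lab r) {..<N} (VM r)"
        unfolding frob2_def by (simp add: sum.reindex VhMe)
      have "errh r = err r"
        unfolding errh_def err_def hr
        apply (subst proj_err_eq[OF _ _ oh]) using fr apply simp apply simp
        apply (subst proj_err_eq[OF fr _ orthQ[OF rT]]) apply simp
        using A B unfolding frob2_def by simp
      then show ?thesis using leafss[OF True] by simp
    next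
      case False
      define t1 where "t1 = r@[False]"
      define t2 where "t2 = r@[True]"
      define k1 where "k1 = kk t1"
      define k2 where "k2 = kk t2"
      define U where "U = Ublock lab kk Q r"
      define H :: "('i + nat) set" where "H = Inr ` {..<k1+k2}"
      have t1T: "t1 \<in> T" and t2T: "t2 \<in> T" using nonleaf[OF rT False] by (auto simp: t1_def t2_def)
      have labr: "lab r = lab t1 \<union> lab t2" and dj: "lab t1 \<inter> lab t2 = {}"
        using splitlab[OF rT False] by (auto simp: t1_def t2_def)
      have sn: "sons T r = {t1, t2}" using sonsnode[OF rT False] by (simp add: t1_def t2_def)
      have s1: "t1 \<in> sons_star T t0" and s2: "t2 \<in> sons_star T t0"
        using sons_star.step[OF less.prems] sn by auto
      have m1: "L - length t1 < L - length r" using mdec t1T unfolding t1_def by blast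
      have m2: "L - length t2 < L - length r" using mdec t2T unfolding t2_def by blast
      have IH1: "err t1 = (\<Sum>s\<in>sons_star T t1. errh s)"
        using less.hyps[OF m1] s1 by simp
      have IH2: "err t2 = (\<Sum>s\<in>sons_star T t2. errh s)"
        using less.hyps[OF m2] s2 by simp
      have ss: "sons_star T r = insert r (sons_star T t1 \<union> sons_star T t2)"
        using sons_star_unfold[of T r] sn by simp
      have f1: "finite (sons_star T t1)" by (rule finite_subset[OF _ finT]) (auto intro: sons_star_T[OF _ t1T])
      have f2: "finite (sons_star T t2)" by (rule finite_subset[OF _ finT]) (auto intro: sons_star_T[OF _ t2T])
      have nr: "r \<notin> sons_star T t1 \<union> sons_star T t2"
        using sons_star_prefix[of r T t1] sons_star_prefix[of r T t2] by (auto simp: t1_def t2_def)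
      have d12: "sons_star T t1 \<inter> sons_star T t2 = {}"
      proof (rule ccontr)
        assume "sons_star T t1 \<inter> sons_star T t2 \<noteq> {}"
        then obtain x where "x \<in> sons_star T t1" "x \<in> sons_star T t2" by blast
        then obtain u v where "x = t1 @ u" "x = t2 @ v" using sons_star_prefix by metis
        then show False by (simp add: t1_def t2_def)
      qed
      have sumss: "(\<Sum>s\<in>sons_star T r. errh s) = errh r + (\<Sum>s\<in>sons_star T t1. errh s) + (\<Sum>s\<in>sons_star T t2. errh s)"
        unfolding ss using f1 f2 nr d12 by (simp add: sum.union_disjoint)
      have fr: "finite (lab r)" using finlab[OF rT] .
      have fl1: "finite (lab t1)" using finlab[OF t1T] .
      have fl2: "finite (lab t2)" using finlab[OF t2T] .
      have hr: "hrows T lab kk r = H" using False by (simp add: hrows_def H_def k1_def k2_def t1_def t2_def)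
      have fH: "finite H" by (simp add: H_def)
      have oh: "orthonormal_cols H {..<kk r} (Qh r)"
        using node_Qh[OF rT False] by (simp add: H_def k1_def k2_def t1_def t2_def)
      have VhE: "VhM r (Inr a) j = (\<Sum>i\<in>lab r. U i a * VM r i j)" if a: "a < k1 + k2" for a j
      proof -
        have "VhM r (Inr a) j = (\<Sum>l<k. (\<Sum>i\<in>lab r. U i a * V r i l) * M r l j)"
          unfolding VhM_def mmul_def U_def using a node_Vh[OF rT False]
          by (intro sum.cong refl) (simp add: k1_def k2_def t1_def t2_def)
        also have "\<dots> = (\<Sum>l<k. \<Sum>i\<in>lab r. U i a * (V r i l * M r l j))"
          by (simp add: sum_distrib_right mult.assoc)
        also have "\<dots> = (\<Sum>i\<in>lab r. \<Sum>l<k. U i a * (V r i l * M r l j))" by (rule sum.swap)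
        also have "\<dots> = (\<Sum>i\<in>lab r. U i a * VM r i j)"
          by (simp add: VM_def mmul_def sum_distrib_left)
        finally show ?thesis .
      qed
      have QE: "Q r i c = (\<Sum>a<k1+k2. U i a * Qh r (Inr a) c)" if "i \<in> lab r" "c < kk r" for i c
        using node_Q[OF rT False that] by (simp add: U_def k1_def k2_def t1_def t2_def)
      have A: "mmul H (mtr (Qh r)) (VhM r) c j = mmul (lab r) (mtr (Q r)) (VM r) c j"
        if c: "c < kk r" for c j
      proof -
        have "mmul H (mtr (Qh r)) (VhM r) c j = (\<Sum>a<k1+k2. Qh r (Inr a) c * VhM r (Inr a) j)"
          unfolding mmul_def mtr_def H_def by (simp add: sum.reindex)
        also have "\<dots> = (\<Sum>a<k1+k2. \<Sum>i\<in>lab r. U i a * Qh r (Inr a) c * VM r i j)"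
          by (intro sum.cong refl) (simp add: VhE sum_distrib_left mult_ac)
        also have "\<dots> = (\<Sum>i\<in>lab r. \<Sum>a<k1+k2. U i a * Qh r (Inr a) c * VM r i j)" by (rule sum.swap)
        also have "\<dots> = (\<Sum>i\<in>lab r. Q r i c * VM r i j)"
          using c by (intro sum.cong refl) (simp add: QE sum_distrib_right)
        finally show ?thesis by (simp add: mmul_def mtr_def)
      qed
      define g1 where "g1 = mmul (lab t1) (mtr (Q t1)) (VM t1)"
      define g2 where "g2 = mmul (lab t2) (mtr (Q t2)) (VM t2)"
      have r1: "t1 \<in> sons T r" and r2: "t2 \<in> sons T r" using sn by auto
      have U1: "U i a = (if a < k1 then Q t1 i a else 0)" if "i \<in> lab t1" for i a
        unfolding U_def k1_def using Ublock_1[of lab r i kk Q a] dj that by (simp add: t1_def t2_def)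
      have U2: "U i a = (if k1 \<le> a then Q t2 i (a - k1) else 0)" if "i \<in> lab t2" "a < k1 + k2" for i a
        unfolding U_def k1_def using Ublock_2[of lab r i a kk Q] dj that by (simp add: t1_def t2_def k1_def k2_def)
      have splitr: "(\<Sum>i\<in>lab r. f i) = (\<Sum>i\<in>lab t1. f i) + (\<Sum>i\<in>lab t2. f i)" for f :: "'i \<Rightarrow> real"
        unfolding labr using fl1 fl2 dj by (rule sum.union_disjoint)
      have B1: "VhM r (Inr a) j = g1 a j" if "a < k1" "j < N" for a j
      proof -
        have "VhM r (Inr a) j = (\<Sum>i\<in>lab t1. U i a * VM r i j) + (\<Sum>i\<in>lab t2. U i a * VM r i j)"
          using VhE[of a j] that splitr by simp
        also have "\<dots> = g1 a j" using that
          by (simp add: U1 U2 g1_def mmul_def mtr_def VMson[OF less.prems r1 _ \<open>j < N\<close>])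
        finally show ?thesis .
      qed
      have B2: "VhM r (Inr (k1 + c)) j = g2 c j" if "c < k2" "j < N" for c j
      proof -
        have "VhM r (Inr (k1 + c)) j = (\<Sum>i\<in>lab t1. U i (k1 + c) * VM r i j) + (\<Sum>i\<in>lab t2. U i (k1 + c) * VM r i j)"
          using VhE[of "k1 + c" j] that splitr by simp
        also have "\<dots> = g2 c j" using that
          by (simp add: U1 U2 g2_def mmul_def mtr_def VMson[OF less.prems r2 _ \<open>j < N\<close>])
        finally show ?thesis .
      qed
      have B: "frob2 H {..<N} (VhM r) = frob2 {..<k1} {..<N} g1 + frob2 {..<k2} {..<N} g2"
      proof -
        have "frob2 H {..<N} (VhM r) = (\<Sum>a<k1+k2. \<Sum>j<N. (VhM r (Inr a) j)\<^sup>2)"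
          unfolding frob2_def H_def by (simp add: sum.reindex)
        also have "\<dots> = (\<Sum>a<k1. \<Sum>j<N. (VhM r (Inr a) j)\<^sup>2) + (\<Sum>c<k2. \<Sum>j<N. (VhM r (Inr (k1 + c)) j)\<^sup>2)"
          by (rule sum_split_add)
        also have "\<dots> = frob2 {..<k1} {..<N} g1 + frob2 {..<k2} {..<N} g2"
          unfolding frob2_def by (simp add: B1 B2)
        finally show ?thesis .
      qed
      have C: "frob2 (lab r) {..<N} (VM r) = frob2 (lab t1) {..<N} (VM t1) + frob2 (lab t2) {..<N} (VM t2)"
        unfolding frob2_def splitr
        by (simp add: VMson[OF less.prems r1] VMson[OF less.prems r2])
      have er: "err r = frob2 (lab r) {..<N} (VM r) - frob2 {..<kk r} {..<N} (mmul (lab r) (mtr (Q r)) (VM r))"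
        unfolding err_def by (rule proj_err_eq[OF fr _ orthQ[OF rT]]) simp
      have eh: "errh r = frob2 H {..<N} (VhM r) - frob2 {..<kk r} {..<N} (mmul (lab r) (mtr (Q r)) (VM r))"
        unfolding errh_def hr proj_err_eq[OF fH _ oh, OF finite_lessThan] frob2_def by (simp add: A)
      have e1: "err t1 = frob2 (lab t1) {..<N} (VM t1) - frob2 {..<k1} {..<N} g1"
        unfolding err_def g1_def k1_def by (rule proj_err_eq[OF fl1 _ orthQ[OF t1T]]) simp
      have e2: "err t2 = frob2 (lab t2) {..<N} (VM t2) - frob2 {..<k2} {..<N} g2"
        unfolding err_def g2_def k2_def by (rule proj_err_eq[OF fl2 _ orthQ[OF t2T]]) simp
      have "err r = errh r + err t1 + err t2" using er eh e1 e2 B C by simp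
      then show ?thesis using sumss IH1 IH2 by simp
    qed
  qed
  show ?thesis using key[OF sons_star.self] unfolding err_def errh_def VM_def VhM_def .
qed

end
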